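(* Let $K$ be a field, and let $R \in \mathfrak R_K$ be of countable type. Then $R$ has a conormed multiplicative basis.
   Context: Socle sequence of a ring $R$: $S_0 = 0$, $S_{\alpha+1}/S_\alpha = \mathrm{Soc}(R/S_\alpha)$, $S_\alpha = \bigcup_{\beta<\alpha}S_\beta$ for limit $\alpha$; $R$ is semiartinian if $S_\tau = R$ for some $\tau$, the least such $\tau$ (of the form $\sigma+1$) being the Loewy length; layers $L_\alpha = S_{\alpha+1}/S_\alpha$. $K^{(\lambda)}$ is the direct sum of $\lambda$ copies of $K$ as a $K$-algebra without unit. $\mathfrak R_K$ is the class of commutative von Neumann regular semiartinian $K$-algebras $R$ of Loewy length $\sigma+1$ such that for each $\alpha\le\sigma$ there is a cardinal $\lambda_\alpha>0$ and a $K$-linear isomorphism of $K$-algebras without unit $L_\alpha\cong K^{(\lambda_\alpha)}$. $R$ is of countable type if $\sigma$ and all $\lambda_\alpha$ are countable. A $K$-basis $B$ of a $K$-algebra $R$ is multiplicative if for all $b,b'\in B$ either $bb'=0$ or $bb'\in B$. A $K$-basis $B$ of a semiartinian $K$-algebra $R$ of Loewy length $\sigma+1$ is conormed if $B$ contains a $K$-basis of $S_\alpha$ for each $\alpha\le\sigma$. *)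

theory Defs
  imports Complex_Main "HOL-Library.Countable_Set"
begin

text \<open>The ring R is modelled as a type 'r of class comm_ring_1 (commutative, unital),
  the field K as a type 'k of class field, and the K-algebra structure by a
  scalar multiplication scale making 'r a K-vector space compatible with products.\<close>

definition is_K_algebra :: "('k::field \<Rightarrow> 'r::comm_ring_1 \<Rightarrow> 'r) \<Rightarrow> bool" where
  "is_K_algebra scale \<longleftrightarrow> vector_space scale \<and>
     (\<forall>a x y. scale a (x * y) = scale a x * y)"

definition is_ideal :: "'r::comm_ring_1 set \<Rightarrow> bool" where
  "is_ideal J \<longleftrightarrow> 0 \<in> J \<and> (\<forall>x\<in>J. \<forall>y\<in>J. x + y \<in> J) \<and> (\<forall>r. \<forall>x\<in>J. r * x \<in> J)"

text \<open>J is minimal over I: J/I is a simple (i.e. minimal nonzero) submodule of R/I.\<close>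
definition minimal_over :: "'r::comm_ring_1 set \<Rightarrow> 'r set \<Rightarrow> bool" where
  "minimal_over I J \<longleftrightarrow> is_ideal J \<and> I \<subset> J \<and>
     (\<forall>M. is_ideal M \<and> I \<subseteq> M \<and> M \<subseteq> J \<longrightarrow> M = I \<or> M = J)"

text \<open>Preimage in R of Soc(R/I): the sum of I and all ideals minimal over I,
  i.e. the smallest ideal containing them.\<close>
definition soc_succ :: "'r::comm_ring_1 set \<Rightarrow> 'r set" where
  "soc_succ I = \<Inter>{J. is_ideal J \<and> I \<subseteq> J \<and> (\<forall>M. minimal_over I M \<longrightarrow> M \<subseteq> J)}"

text \<open>The members of the socle sequence (S_alpha): the smallest family containing 0 and
  closed under the successor step and under unions of nonempty chains.\<close>
inductive_set socle_seq :: "'r::comm_ring_1 set set" where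
  zero: "{0} \<in> socle_seq"
| succ: "I \<in> socle_seq \<Longrightarrow> soc_succ I \<in> socle_seq"
| lim: "(\<And>I. I \<in> C \<Longrightarrow> I \<in> socle_seq) \<Longrightarrow> C \<noteq> {} \<Longrightarrow> Complete_Partial_Order.chain (\<subseteq>) C
          \<Longrightarrow> \<Union>C \<in> socle_seq"

definition semiartinian :: "'r::comm_ring_1 itself \<Rightarrow> bool" where
  "semiartinian _ \<longleftrightarrow> (UNIV :: 'r set) \<in> socle_seq"

definition von_neumann_regular :: "'r::comm_ring_1 itself \<Rightarrow> bool" where
  "von_neumann_regular _ \<longleftrightarrow> (\<forall>x::'r. \<exists>y. x * y * x = x)"

text \<open>A K-linear isomorphism of K-algebras without unit J/I \<cong> K^(Lambda), where
  K^(Lambda) = finitely supported functions Lambda \<rightarrow> K with pointwise operations;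
  expressed by a map f on J that is additive, multiplicative, K-linear, onto K^(Lambda),
  with kernel exactly I.\<close>
definition layer_iso ::
  "('k::field \<Rightarrow> 'r::comm_ring_1 \<Rightarrow> 'r) \<Rightarrow> 'r set \<Rightarrow> 'r set \<Rightarrow> 'i set \<Rightarrow> ('r \<Rightarrow> 'i \<Rightarrow> 'k) \<Rightarrow> bool" where
  "layer_iso scale I J \<Lambda> f \<longleftrightarrow>
     (\<forall>x\<in>J. finite {i. f x i \<noteq> 0} \<and> {i. f x i \<noteq> 0} \<subseteq> \<Lambda>) \<and>
     (\<forall>x\<in>J. \<forall>y\<in>J. f (x + y) = (\<lambda>i. f x i + f y i)) \<and>
     (\<forall>x\<in>J. \<forall>y\<in>J. f (x * y) = (\<lambda>i. f x i * f y i)) \<and>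
     (\<forall>a. \<forall>x\<in>J. f (scale a x) = (\<lambda>i. a * f x i)) \<and>
     (\<forall>x\<in>J. f x = (\<lambda>i. 0) \<longleftrightarrow> x \<in> I) \<and>
     (\<forall>g. finite {i. g i \<noteq> 0} \<and> {i. g i \<noteq> 0} \<subseteq> \<Lambda> \<longrightarrow> (\<exists>x\<in>J. f x = g))"

text \<open>The layers are L = soc_succ I / I for the members I \<noteq> R of the socle sequence
  (these are exactly the layers L_alpha, alpha \<le> sigma). Cardinals lambda_alpha are
  represented by index sets of elements of R (any such lambda_alpha satisfies
  lambda_alpha \<le> |R|).\<close>
definition in_class_RK :: "('k::field \<Rightarrow> 'r::comm_ring_1 \<Rightarrow> 'r) \<Rightarrow> bool" where
  "in_class_RK scale \<longleftrightarrow> is_K_algebra scale \<and>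
     von_neumann_regular TYPE('r) \<and> semiartinian TYPE('r) \<and>
     (\<forall>I\<in>socle_seq. I \<noteq> UNIV \<longrightarrow>
        (\<exists>(\<Lambda>::'r set) f. \<Lambda> \<noteq> {} \<and> layer_iso scale I (soc_succ I) \<Lambda> f))"

text \<open>Countable type: the Loewy length (equivalently the set of members of the socle
  sequence) is countable and every lambda_alpha is countable.\<close>
definition countable_type :: "('k::field \<Rightarrow> 'r::comm_ring_1 \<Rightarrow> 'r) \<Rightarrow> bool" where
  "countable_type scale \<longleftrightarrow> countable (socle_seq :: 'r set set) \<and>
     (\<forall>I\<in>socle_seq. I \<noteq> UNIV \<longrightarrow>
        (\<exists>(\<Lambda>::'r set) f. \<Lambda> \<noteq> {} \<and> countable \<Lambda> \<and> layer_iso scale I (soc_succ I) \<Lambda> f))"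

definition is_K_basis :: "('k::field \<Rightarrow> 'r::comm_ring_1 \<Rightarrow> 'r) \<Rightarrow> 'r set \<Rightarrow> 'r set \<Rightarrow> bool" where
  "is_K_basis scale B V \<longleftrightarrow> B \<subseteq> V \<and> \<not> module.dependent scale B \<and> module.span scale B = V"

definition multiplicative_basis :: "('k::field \<Rightarrow> 'r::comm_ring_1 \<Rightarrow> 'r) \<Rightarrow> 'r set \<Rightarrow> bool" where
  "multiplicative_basis scale B \<longleftrightarrow> is_K_basis scale B UNIV \<and>
     (\<forall>b\<in>B. \<forall>b'\<in>B. b * b' = 0 \<or> b * b' \<in> B)"

definition conormed_basis :: "('k::field \<Rightarrow> 'r::comm_ring_1 \<Rightarrow> 'r) \<Rightarrow> 'r set \<Rightarrow> bool" where
  "conormed_basis scale B \<longleftrightarrow> is_K_basis scale B UNIV \<and>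
     (\<forall>S\<in>socle_seq. \<exists>C\<subseteq>B. is_K_basis scale C S)"

end

theory Submission
  imports Defs "HOL-Library.Bourbaki_Witt_Fixpoint"
begin


lemma ideal_UNIV: "is_ideal UNIV" by (simp add: is_ideal_def)

lemma soc_succ_ideal: "is_ideal (soc_succ I)"
  unfolding soc_succ_def is_ideal_def by auto

lemma soc_succ_ge: "I \<subseteq> soc_succ I"
  unfolding soc_succ_def by auto

lemma socle_seq_ideal: "S \<in> socle_seq \<Longrightarrow> is_ideal S"
proof (induction rule: socle_seq.induct)
  case zero
  then show ?case by (simp add: is_ideal_def)
next
  case (succ I)
  show ?case by (rule soc_succ_ideal)
next
  case (lim C)
  show ?case unfolding is_ideal_def
  proof (intro conjI ballI allI)
    show "0 \<in> \<Union>C" using lim by (auto simp: is_ideal_def)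
  next
    fix x y assume "x \<in> \<Union>C" "y \<in> \<Union>C"
    then obtain A B where AB: "A \<in> C" "B \<in> C" "x \<in> A" "y \<in> B" by auto
    have ch: "Complete_Partial_Order.chain (\<subseteq>) C" using lim by simp
    have "A \<subseteq> B \<or> B \<subseteq> A" using chainD[OF ch AB(1,2)] by simp
    moreover have "is_ideal A" "is_ideal B" using lim AB by auto
    ultimately show "x + y \<in> \<Union>C" using AB
      unfolding is_ideal_def by blast
  next
    fix r x assume "x \<in> \<Union>C"
    then obtain A where "A \<in> C" "x \<in> A" by auto
    moreover have "is_ideal A" using lim \<open>A \<in> C\<close> by auto
    ultimately show "r * x \<in> \<Union>C" unfolding is_ideal_def by blast
  qed
qed

lemma socle_seq_chain:
  assumes "A \<in> (socle_seq :: 'r::comm_ring_1 set set)" "B \<in> socle_seq"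
  shows "A \<subseteq> B \<or> B \<subseteq> A"
proof -
  interpret bw: bourbaki_witt_fixpoint Sup "{(x::'r set, y). x \<le> y}" soc_succ
    by (rule bourbaki_witt_fixpoint_complete_latticeI) (rule soc_succ_ge)
  have sub: "S \<in> bw.iterates_above {0}" if "S \<in> socle_seq" for S
    using that
  proof (induction rule: socle_seq.induct)
    case zero then show ?case by (rule bw.iterates_above.base)
  next
    case (succ I) show ?case by (rule bw.iterates_above.step[OF succ.IH])
  next
    case (lim C)
    have "C \<in> Chains {(x::'r set, y). x \<le> y}"
      using lim by (simp add: in_Chains_conv_chain)
    then show ?case using lim bw.iterates_above.Sup[of C "{0}"] by simp
  qed
  have "bw.iterates_above {0} \<in> Chains {(x::'r set, y). x \<le> y}"
    by (rule bw.chain_iterates_above) (auto simp: Field_def)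
  then show ?thesis using sub[OF assms(1)] sub[OF assms(2)]
    by (auto dest: in_ChainsD)
qed



lemma list_trich:
  fixes u v :: "'a list"
  shows "take (length u) v = u \<or> take (length v) u = v \<or>
         (\<exists>j<length u. j < length v \<and> u ! j \<noteq> v ! j)"
proof (cases "\<exists>j<length u. j < length v \<and> u ! j \<noteq> v ! j")
  case True then show ?thesis by blast
next
  case False
  show ?thesis
  proof (cases "length u \<le> length v")
    case True
    have "take (length u) v = u"
      using False True by (intro nth_equalityI) auto
    then show ?thesis by blast
  next
    case f2: False
    have "take (length v) u = v"
    proof (rule nth_equalityI)
      show "length (take (length v) u) = length v" using f2 by simp
      fix i assume "i < length (take (length v) u)"
      then have "i < length v" "i < length u" using f2 by auto
      then show "take (length v) u ! i = v ! i" using False by auto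
    qed
    then show ?thesis by blast
  qed
qed

lemma prod_idem:
  fixes f :: "'a \<Rightarrow> 'r::comm_ring_1"
  assumes "\<And>j. j \<in> A \<Longrightarrow> f j * f j = f j"
  shows "prod f A * prod f A = prod f A"
  using assms by (simp add: prod.distrib[symmetric])

locale kalg = vector_space scale for scale :: "'k::field \<Rightarrow> 'r::comm_ring_1 \<Rightarrow> 'r" +
  assumes scale_mult: "scale a (x * y) = scale a x * y"
begin

lemma mult_scale: "x * scale a y = scale a (x * y)"
  by (metis scale_mult mult.commute)

lemma ideal_scale: "is_ideal S \<Longrightarrow> x \<in> S \<Longrightarrow> scale a x \<in> S"
  by (metis is_ideal_def mult_1 scale_mult)

lemma ideal_subspace: "is_ideal S \<Longrightarrow> subspace S"
  unfolding subspace_def using ideal_scale by (auto simp: is_ideal_def)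

end

locale tree_setup = kalg scale for scale :: "'k::field \<Rightarrow> 'r::comm_ring_1 \<Rightarrow> 'r" +
  fixes g :: "nat \<Rightarrow> 'r" and SS :: "'r set set"
  assumes g_idem: "g n * g n = g n"
    and g_span: "span (range g) = UNIV"
    and SS_ideal: "S \<in> SS \<Longrightarrow> is_ideal S"
    and SS_chain: "S \<in> SS \<Longrightarrow> T \<in> SS \<Longrightarrow> S \<subseteq> T \<or> T \<subseteq> S"
begin

definition lit :: "nat \<Rightarrow> bool \<Rightarrow> 'r" where
  "lit j x = (if x then g j else 1 - g j)"

definition atom :: "bool list \<Rightarrow> 'r" where
  "atom w = (\<Prod>j<length w. lit j (w ! j))"

definition choice :: "bool list \<Rightarrow> bool" where
  "choice w = (\<forall>S\<in>SS. atom (w @ [False]) \<in> S \<longrightarrow> atom (w @ [True]) \<in> S)"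

definition splits :: "bool list \<Rightarrow> bool" where
  "splits w \<longleftrightarrow> atom (w @ [True]) \<noteq> 0 \<and> atom (w @ [False]) \<noteq> 0"

definition U :: "bool list set" where
  "U = {[]} \<union> {w @ [choice w] | w. splits w}"

definition BB :: "'r set" where
  "BB = atom ` U"

lemma lit_idem: "lit j x * lit j x = lit j x"
  using g_idem[of j] by (auto simp: lit_def algebra_simps)

lemma lit_orth: "x \<noteq> y \<Longrightarrow> lit j x * lit j y = 0"
  using g_idem[of j] by (cases x; cases y) (auto simp: lit_def algebra_simps)

lemma atom_nil: "atom [] = 1" by (simp add: atom_def)

lemma atom_snoc: "atom (w @ [x]) = atom w * lit (length w) x"
  unfolding atom_def by (simp add: lessThan_Suc nth_append mult.commute)

lemma atom_idem: "atom w * atom w = atom w"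
  unfolding atom_def by (rule prod_idem) (simp add: lit_idem)

lemma atom_prefix:
  assumes "take (length u) v = u"
  shows "atom u * atom v = atom v"
proof -
  have le: "length u \<le> length v" using assms
    by (metis length_take min.cobounded1)
  have split: "{..<length v} = {..<length u} \<union> {length u..<length v}" using le by auto
  have "atom v = (\<Prod>j<length u. lit j (v ! j)) * (\<Prod>j\<in>{length u..<length v}. lit j (v ! j))"
    unfolding atom_def split by (subst prod.union_disjoint) auto
  also have "(\<Prod>j<length u. lit j (v ! j)) = atom u"
    unfolding atom_def
  proof (rule prod.cong[OF refl])
    fix j assume "j \<in> {..<length u}"
    then have "u ! j = v ! j" using assms le by (metis lessThan_iff nth_take)
    then show "lit j (v ! j) = lit j (u ! j)" by simp
  qed
  finally have "atom v = atom u * (\<Prod>j\<in>{length u..<length v}. lit j (v ! j))" .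
  then show ?thesis by (metis atom_idem mult.assoc)
qed

lemma atom_diff:
  assumes "j < length u" "j < length v" "u ! j \<noteq> v ! j"
  shows "atom u * atom v = 0"
proof -
  have "atom u = lit j (u ! j) * (\<Prod>i\<in>{..<length u} - {j}. lit i (u ! i))"
    unfolding atom_def using assms by (subst prod.remove[of _ j]) auto
  moreover have "atom v = lit j (v ! j) * (\<Prod>i\<in>{..<length v} - {j}. lit i (v ! i))"
    unfolding atom_def using assms by (subst prod.remove[of _ j]) auto
  ultimately have "atom u * atom v = (lit j (u ! j) * lit j (v ! j)) *
      ((\<Prod>i\<in>{..<length u} - {j}. lit i (u ! i)) * (\<Prod>i\<in>{..<length v} - {j}. lit i (v ! i)))"
    by (simp add: ac_simps)
  then show ?thesis using lit_orth[OF assms(3)] by simp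
qed

lemma atom_mult_cases: "atom u * atom v = atom u \<or> atom u * atom v = atom v \<or> atom u * atom v = 0"
  using list_trich[of u v] atom_prefix[of u v] atom_prefix[of v u] atom_diff[of _ u v]
  by (auto simp: mult.commute)

lemma atom_split: "atom (w @ [True]) + atom (w @ [False]) = atom w"
  by (simp add: atom_snoc lit_def algebra_simps)

lemma atom_split': "atom (w @ [x]) + atom (w @ [\<not> x]) = atom w"
  using atom_split[of w] by (cases x) (auto simp: add.commute)

lemma lit_orth': "lit j x * lit j (\<not> x) = 0" by (rule lit_orth) auto

end


context tree_setup
begin

definition A :: "nat \<Rightarrow> 'r set" where
  "A n = atom ` {w. length w = n}"

lemma finite_words: "finite {w :: bool list. length w = n}"
  using finite_lists_length_eq[of "UNIV :: bool set" n] by simp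

lemma finite_A: "finite (A n)"
  unfolding A_def using finite_words by simp

lemma A_Suc: "A n \<subseteq> span (A (Suc n))"
proof
  fix x assume "x \<in> A n"
  then obtain w where w: "length w = n" "x = atom w" by (auto simp: A_def)
  have "atom (w @ [True]) \<in> A (Suc n)" "atom (w @ [False]) \<in> A (Suc n)"
    using w by (auto simp: A_def)
  then have "atom (w @ [True]) + atom (w @ [False]) \<in> span (A (Suc n))"
    by (intro span_add span_base)
  then show "x \<in> span (A (Suc n))" using w atom_split by simp
qed

lemma span_A_Suc: "span (A n) \<subseteq> span (A (Suc n))"
  using A_Suc by (metis span_minimal subspace_span)

lemma span_A_mono: "m \<le> n \<Longrightarrow> span (A m) \<subseteq> span (A n)"
proof (induction n)
  case 0 then show ?case by simp
next
  case (Suc n)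
  then show ?case using span_A_Suc[of n] by (cases "m = Suc n") auto
qed

lemma one_span_A: "1 \<in> span (A n)"
proof -
  have "A 0 = {1}" by (auto simp: A_def atom_nil)
  then have "1 \<in> span (A 0)" by (simp add: span_base)
  then show ?thesis using span_A_mono[of 0 n] by auto
qed

lemma g_mult_span: "y \<in> span (A n) \<Longrightarrow> g n * y \<in> span (A (Suc n))"
proof (induction rule: span_induct_alt)
  case base then show ?case by (simp add: span_zero)
next
  case (step c x y)
  then obtain w where w: "length w = n" "x = atom w" by (auto simp: A_def)
  have "g n * x = atom (w @ [True])" using w by (simp add: atom_snoc lit_def mult.commute)
  moreover have "atom (w @ [True]) \<in> A (Suc n)" using w by (auto simp: A_def)
  ultimately have "g n * x \<in> span (A (Suc n))" by (simp add: span_base)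
  then have "scale c (g n * x) + g n * y \<in> span (A (Suc n))"
    using step by (intro span_add span_scale)
  then show ?case by (simp add: distrib_left mult_scale)
qed

lemma g_span_A: "g n \<in> span (A (Suc n))"
  using g_mult_span[OF one_span_A[of n]] by simp

lemma in_some_A: "\<exists>n. x \<in> span (A n)"
proof -
  have "x \<in> span (range g)" using g_span by simp
  then show ?thesis
  proof (induction rule: span_induct_alt)
    case base then show ?case using span_zero by blast
  next
    case (step c x y)
    then obtain m n where "x = g m" "y \<in> span (A n)" by auto
    then have "x \<in> span (A (max (Suc m) n))" "y \<in> span (A (max (Suc m) n))"
      using g_span_A[of m] span_A_mono[of "Suc m" "max (Suc m) n"] span_A_mono[of n "max (Suc m) n"]
      by auto
    then show ?case by (blast intro: span_add span_scale)
  qed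
qed

lemma A_orth:
  assumes "a \<in> A n" "b \<in> A n" "a \<noteq> b"
  shows "a * b = 0"
proof -
  obtain u v where uv: "length u = n" "length v = n" "a = atom u" "b = atom v"
    using assms by (auto simp: A_def)
  then have "u \<noteq> v" using assms by auto
  have "\<exists>j<n. u ! j \<noteq> v ! j"
  proof (rule ccontr)
    assume "\<not> ?thesis"
    then have "u = v" using uv by (intro nth_equalityI) auto
    then show False using \<open>u \<noteq> v\<close> by simp
  qed
  then obtain j where "j < n" "u ! j \<noteq> v ! j" by blast
  then show ?thesis using atom_diff[of j u v] uv by simp
qed

lemma A_idem: "a \<in> A n \<Longrightarrow> a * a = a"
  by (auto simp: A_def atom_idem)

lemma span_A_ideal:
  assumes x: "x \<in> span (A n)" and S: "is_ideal S" "x \<in> S"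
  shows "x \<in> span (A n \<inter> S)"
proof -
  obtain u where u: "x = (\<Sum>v\<in>A n. scale (u v) v)"
    using x span_finite[OF finite_A[of n]] by auto
  have ax: "a * x = scale (u a) a" if a: "a \<in> A n" for a
  proof -
    have "a * x = (\<Sum>v\<in>A n. scale (u v) (a * v))"
      unfolding u by (simp add: sum_distrib_left mult_scale)
    also have "\<dots> = scale (u a) (a * a) + (\<Sum>v\<in>A n - {a}. scale (u v) (a * v))"
      using a finite_A by (simp add: sum.remove)
    also have "(\<Sum>v\<in>A n - {a}. scale (u v) (a * v)) = 0"
      using A_orth[of a n] a by (intro sum.neutral) auto
    finally show ?thesis using A_idem[OF a] by simp
  qed
  have "scale (u v) v \<in> span (A n \<inter> S)" if v: "v \<in> A n" for v
  proof (cases "u v = 0")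
    case True then show ?thesis by (simp add: span_zero)
  next
    case False
    have "v = scale (inverse (u v)) (v * x)" using ax[OF v] False by simp
    moreover have "v * x \<in> S" using S by (simp add: is_ideal_def mult.commute)
    ultimately have "v \<in> S" using ideal_scale[OF S(1)] by metis
    then show ?thesis using v by (intro span_scale span_base) auto
  qed
  then show ?thesis unfolding u by (intro span_sum) auto
qed

lemma choice_prop:
  assumes "S \<in> SS" "atom (w @ [\<not> choice w]) \<in> S"
  shows "atom (w @ [choice w]) \<in> S"
proof (cases "choice w")
  case True then show ?thesis using assms unfolding choice_def by auto
next
  case False
  then obtain S1 where S1: "S1 \<in> SS" "atom (w @ [False]) \<in> S1" "atom (w @ [True]) \<notin> S1"
    unfolding choice_def by auto
  have "atom (w @ [True]) \<in> S" using assms False by simp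
  then have "S1 \<subseteq> S" using SS_chain[OF assms(1) S1(1)] S1 by auto
  then show ?thesis using S1 False by auto
qed

lemma atom_in_span_BB:
  assumes S: "S \<in> SS" shows "atom w \<in> S \<Longrightarrow> atom w \<in> span (BB \<inter> S)"
proof (induction w rule: rev_induct)
  case Nil
  then show ?case by (intro span_base) (auto simp: BB_def U_def)
next
  case (snoc x w)
  have I: "is_ideal S" using SS_ideal[OF S] .
  show ?case
  proof (cases "splits w")
    case True
    show ?thesis
    proof (cases "x = choice w")
      case True
      then have "w @ [x] \<in> U" using \<open>splits w\<close> by (auto simp: U_def)
      then show ?thesis using snoc by (intro span_base) (auto simp: BB_def)
    next
      case False
      then have x: "x = (\<not> choice w)" by auto
      have k: "atom (w @ [choice w]) \<in> S" using choice_prop[OF S] snoc x by simp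
      have "atom w = atom (w @ [x]) + atom (w @ [choice w])"
        using atom_split'[of w x] x by simp
      then have "atom w \<in> S" using k snoc I by (simp add: is_ideal_def)
      then have aw: "atom w \<in> span (BB \<inter> S)" by (rule snoc.IH)
      have "w @ [choice w] \<in> U" using \<open>splits w\<close> by (auto simp: U_def)
      then have "atom (w @ [choice w]) \<in> span (BB \<inter> S)" using k
        by (intro span_base) (auto simp: BB_def)
      then have "atom w - atom (w @ [choice w]) \<in> span (BB \<inter> S)"
        using aw by (rule span_diff[rotated])
      then show ?thesis using \<open>atom w = _\<close> by simp
    qed
  next
    case False
    then have "atom (w @ [x]) = 0 \<or> atom (w @ [\<not> x]) = 0"
      unfolding splits_def by (cases x) auto
    then show ?thesis
    proof
      assume "atom (w @ [x]) = 0" then show ?thesis by (simp add: span_zero)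
    next
      assume "atom (w @ [\<not> x]) = 0"
      then have "atom (w @ [x]) = atom w" using atom_split'[of w x] by simp
      then show ?thesis using snoc by simp
    qed
  qed
qed

lemma ideal_in_span_BB:
  assumes S: "S \<in> SS" and x: "x \<in> S"
  shows "x \<in> span (BB \<inter> S)"
proof -
  obtain n where n: "x \<in> span (A n)" using in_some_A by blast
  have "x \<in> span (A n \<inter> S)" by (rule span_A_ideal[OF n SS_ideal[OF S] x])
  moreover have "A n \<inter> S \<subseteq> span (BB \<inter> S)"
    using atom_in_span_BB[OF S] by (auto simp: A_def)
  ultimately show ?thesis by (metis span_minimal subspace_span subsetD)
qed

end


context tree_setup
begin

lemma BB_mult: "b \<in> BB \<Longrightarrow> b' \<in> BB \<Longrightarrow> b * b' = 0 \<or> b * b' \<in> BB"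
  unfolding BB_def using atom_mult_cases by fastforce

definition rep :: "'r \<Rightarrow> bool list" where
  "rep v = (SOME w. w \<in> U \<and> atom w = v)"

lemma rep: "v \<in> BB \<Longrightarrow> rep v \<in> U \<and> atom (rep v) = v"
  unfolding rep_def BB_def by (rule someI_ex) auto

lemma U_cons: "r \<in> U \<Longrightarrow> r \<noteq> [] \<Longrightarrow> \<exists>w. r = w @ [choice w] \<and> splits w"
  unfolding U_def by auto

lemma BB_indep: "\<not> dependent BB"
proof
  assume "dependent BB"
  then obtain t u where t: "finite t" "t \<subseteq> BB" "(\<Sum>v\<in>t. scale (u v) v) = 0" "\<exists>v\<in>t. u v \<noteq> 0"
    unfolding dependent_explicit by blast
  define F where "F = {v\<in>t. u v \<noteq> 0}"
  have F: "finite F" "F \<subseteq> BB" "F \<noteq> {}" "\<And>v. v \<in> F \<Longrightarrow> u v \<noteq> 0"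
    using t by (auto simp: F_def)
  have sumF: "(\<Sum>v\<in>F. scale (u v) v) = 0"
    using t unfolding F_def by (subst sum.mono_neutral_left[of t]) auto
  have "Max ((length \<circ> rep) ` F) \<in> (length \<circ> rep) ` F" using F by (intro Max_in) auto
  then obtain b where b: "b \<in> F" "length (rep b) = Max ((length \<circ> rep) ` F)" by auto
  have bmax: "length (rep c) \<le> length (rep b)" if "c \<in> F" for c
    using b that F by auto
  show False
  proof (cases "rep b = []")
    case True
    have "c = 1" if "c \<in> F" for c
    proof -
      have "rep c = []" using bmax[OF that] True by simp
      then show ?thesis using rep[of c] that F by (auto simp: atom_nil)
    qed
    then have "F = {1}" using F by auto
    then show False using sumF F(4)[of 1] by simp
  next
    case False
    have rb: "rep b \<in> U" "atom (rep b) = b" using rep b F by auto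
    then obtain w where w: "rep b = w @ [choice w]" "splits w" using U_cons False by blast
    define d where "d = atom (w @ [\<not> choice w])"
    have b_eq: "b = atom (w @ [choice w])" using rb w by simp
    have b0: "b \<noteq> 0" and d0: "d \<noteq> 0" using w(2) b_eq unfolding d_def splits_def
      by (cases "choice w"; simp)+
    have bd: "b * d = 0" unfolding b_eq d_def
      by (rule atom_diff[of "length w"]) auto
    have wb: "atom w * b = b" unfolding b_eq by (rule atom_prefix) simp
    have wd: "atom w * d = d" unfolding d_def by (rule atom_prefix) simp
    have cases: "c * atom w = atom w \<or> c * atom w = 0" if c: "c \<in> F" "c \<noteq> b" for c
    proof -
      have rc: "rep c \<in> U" "atom (rep c) = c" using rep c F by auto
      have len: "length (rep c) \<le> Suc (length w)" using bmax[OF c(1)] w by simp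
      consider "take (length (rep c)) w = rep c" | "take (length w) (rep c) = w"
        | "\<exists>j<length (rep c). j < length w \<and> rep c ! j \<noteq> w ! j"
        using list_trich by blast
      then show ?thesis
      proof cases
        case 1 then show ?thesis using atom_prefix rc by metis
      next
        case 3 then show ?thesis using atom_diff rc by metis
      next
        case 2
        show ?thesis
        proof (cases "length (rep c) = length w")
          case True
          then have "rep c = w" using 2 by simp
          then show ?thesis using rc atom_idem by metis
        next
          case False
          then have lr: "length (rep c) = Suc (length w)" using 2 len
          proof -
            have "length (take (length w) (rep c)) = length w" using 2 by simp
            then have "length w \<le> length (rep c)" by simp
            then show ?thesis using len False by simp
          qed
          then have "rep c \<noteq> []" by auto
          then obtain v where v: "rep c = v @ [choice v]" using U_cons rc by blast
          then have "v = w" using 2 lr by simp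
          then have "rep c = rep b" using v w by simp
          then have "c = b"
          proof -
            assume eq: "rep c = rep b"
            have "c = atom (rep c)" using rc(2) by simp
            also have "\<dots> = atom (rep b)" using eq by simp
            also have "\<dots> = b" using rb(2) .
            finally show ?thesis .
          qed
          then show ?thesis using c by simp
        qed
      qed
    qed
    define F1 where "F1 = {c \<in> F - {b}. c * atom w = atom w}"
    define F0 where "F0 = F - {b} - F1"
    have F0z: "c * atom w = 0" if "c \<in> F0" for c
      using cases that unfolding F0_def F1_def by auto
    have Fdec: "F = insert b (F1 \<union> F0)" using b unfolding F0_def F1_def by auto
    have fin: "finite F1" "finite F0" using F unfolding F0_def F1_def by auto
    define s where "s = (\<Sum>c\<in>F1. u c)"
    define X1 where "X1 = (\<Sum>c\<in>F1. scale (u c) c)"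
    define X0 where "X0 = (\<Sum>c\<in>F0. scale (u c) c)"
    have bn: "b \<notin> F1 \<union> F0" unfolding F0_def F1_def by auto
    have disj: "F1 \<inter> F0 = {}" unfolding F0_def by auto
    have "(\<Sum>v\<in>F. scale (u v) v) = (\<Sum>v\<in>insert b (F1 \<union> F0). scale (u v) v)"
      using Fdec by simp
    also have "\<dots> = scale (u b) b + (\<Sum>v\<in>F1 \<union> F0. scale (u v) v)"
      using bn fin by (simp add: sum.insert)
    also have "(\<Sum>v\<in>F1 \<union> F0. scale (u v) v) = X1 + X0"
      unfolding X1_def X0_def by (rule sum.union_disjoint[OF fin disj])
    finally have "(\<Sum>v\<in>F. scale (u v) v) = scale (u b) b + (X1 + X0)" .
    then have x0: "scale (u b) b + X1 + X0 = 0" using sumF by (simp add: add.assoc)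
    have c1: "c * e = e" if "c \<in> F1" "atom w * e = e" for c e
    proof -
      have "c * atom w = atom w" using that(1) unfolding F1_def by simp
      then show ?thesis by (metis that(2) mult.assoc)
    qed
    have c0: "c * e = 0" if "c \<in> F0" "atom w * e = e" for c e
      using F0z[OF that(1)] that(2) by (metis mult.assoc mult_zero_left)
    have X1e: "X1 * e = scale s e" if "atom w * e = e" for e
    proof -
      have "X1 * e = (\<Sum>c\<in>F1. scale (u c) (c * e))"
        unfolding X1_def by (simp add: sum_distrib_right scale_mult)
      also have "\<dots> = (\<Sum>c\<in>F1. scale (u c) e)" using c1 that by simp
      also have "\<dots> = scale s e" unfolding s_def by (simp add: scale_sum_left)
      finally show ?thesis .
    qed
    have X0e: "X0 * e = 0" if "atom w * e = e" for e
    proof -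
      have "X0 * e = (\<Sum>c\<in>F0. scale (u c) (c * e))"
        unfolding X0_def by (simp add: sum_distrib_right scale_mult)
      also have "\<dots> = 0" using c0 that by simp
      finally show ?thesis .
    qed
    have "(scale (u b) b + X1 + X0) * d = 0" using x0 by simp
    then have "scale s d = 0"
      using X1e[OF wd] X0e[OF wd] bd by (simp add: distrib_right scale_mult[symmetric])
    then have s0: "s = 0" using d0 by simp
    have "(scale (u b) b + X1 + X0) * b = 0" using x0 by simp
    then have "scale (u b) b = 0"
      using X1e[OF wb] X0e[OF wb] s0 atom_idem b_eq
      by (simp add: distrib_right scale_mult[symmetric])
    then show False using b0 F(4)[OF b(1)] by simp
  qed
qed

end


context tree_setup
begin

lemma tree_result:
  assumes "UNIV \<in> SS"
  shows "\<exists>B. is_K_basis scale B UNIV \<and> (\<forall>b\<in>B. \<forall>b'\<in>B. b * b' = 0 \<or> b * b' \<in> B) \<and>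
    (\<forall>S\<in>SS. \<exists>C\<subseteq>B. is_K_basis scale C S)"
proof -
  have sp: "span (BB \<inter> S) = S" if S: "S \<in> SS" for S
  proof
    show "span (BB \<inter> S) \<subseteq> S"
      using ideal_subspace[OF SS_ideal[OF S]] by (intro span_minimal) auto
    show "S \<subseteq> span (BB \<inter> S)" using ideal_in_span_BB[OF S] by auto
  qed
  have 1: "is_K_basis scale BB UNIV"
    unfolding is_K_basis_def using BB_indep sp[OF assms] by simp
  have 2: "\<forall>b\<in>BB. \<forall>b'\<in>BB. b * b' = 0 \<or> b * b' \<in> BB" using BB_mult by blast
  have 3: "\<exists>C\<subseteq>BB. is_K_basis scale C S" if S: "S \<in> SS" for S
    using sp[OF S] BB_indep independent_mono[of BB "BB \<inter> S"]
    by (intro exI[of _ "BB \<inter> S"]) (auto simp: is_K_basis_def)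
  show ?thesis using 1 2 3 by blast
qed

end

context kalg
begin

lemma layer_isoD:
  assumes "layer_iso scale I J \<Lambda> f"
  shows layer_supp: "\<And>x. x \<in> J \<Longrightarrow> finite {i. f x i \<noteq> 0} \<and> {i. f x i \<noteq> 0} \<subseteq> \<Lambda>"
    and layer_add: "\<And>x y. x \<in> J \<Longrightarrow> y \<in> J \<Longrightarrow> f (x + y) = (\<lambda>i. f x i + f y i)"
    and layer_mult: "\<And>x y. x \<in> J \<Longrightarrow> y \<in> J \<Longrightarrow> f (x * y) = (\<lambda>i. f x i * f y i)"
    and layer_scale: "\<And>a x. x \<in> J \<Longrightarrow> f (scale a x) = (\<lambda>i. a * f x i)"
    and layer_ker: "\<And>x. x \<in> J \<Longrightarrow> f x = (\<lambda>i. 0) \<longleftrightarrow> x \<in> I"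
    and layer_surj: "\<And>g. finite {i. g i \<noteq> 0} \<Longrightarrow> {i. g i \<noteq> 0} \<subseteq> \<Lambda> \<Longrightarrow> \<exists>x\<in>J. f x = g"
  using assms unfolding layer_iso_def by simp_all

lemma layer_zero:
  assumes "layer_iso scale I J \<Lambda> f" "0 \<in> J"
  shows "f 0 = (\<lambda>i. 0)"
proof -
  have "f (0 + 0) = (\<lambda>i. f 0 i + f 0 i)" using layer_add[OF assms(1)] assms(2) by blast
  then show ?thesis by (metis add_cancel_right_right add_0)
qed

lemma layer_diff_ker:
  assumes L: "layer_iso scale I J \<Lambda> f" and J: "is_ideal J" and x: "x \<in> J" "y \<in> J"
    and eq: "f x = f y"
  shows "x - y \<in> I"
proof -
  have xy: "x - y \<in> J" using J x by (metis diff_conv_add_uminus is_ideal_def mult_minus1)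
  have "f (y + (x - y)) = (\<lambda>i. f y i + f (x - y) i)"
    using layer_add[OF L] xy x by blast
  then have "f (x - y) = (\<lambda>i. 0)" using eq by (simp add: fun_eq_iff)
  then show ?thesis using layer_ker[OF L] xy by blast
qed

lemma layer_lift:
  assumes L: "layer_iso scale I J \<Lambda> f" and J: "is_ideal J" and I: "is_ideal I" "I \<subseteq> J"
    and vnr: "\<And>x::'r. \<exists>y. x * y * x = x" and i: "i \<in> \<Lambda>"
  shows "\<exists>e. e * e = e \<and> e \<in> J \<and> f e = (\<lambda>j. if j = i then 1 else 0)"
proof -
  define d where "d = (\<lambda>j. if j = i then (1::'k) else 0)"
  have "finite {j. d j \<noteq> 0} \<and> {j. d j \<noteq> 0} \<subseteq> \<Lambda>" using i by (auto simp: d_def)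
  then obtain x where x: "x \<in> J" "f x = d" using layer_surj[OF L] by blast
  obtain y where y: "x * y * x = x" using vnr by blast
  define e where "e = x * y"
  have "e * e = (x * y * x) * y" unfolding e_def by (simp add: mult.assoc)
  then have ee: "e * e = e" using y by (simp add: e_def)
  have "y * x \<in> J" using J x(1) unfolding is_ideal_def by blast
  then have eJ: "e \<in> J" by (simp add: e_def mult.commute)
  have xxJ: "x * x \<in> J" using J x(1) unfolding is_ideal_def by blast
  have "f (x * x) = (\<lambda>j. f x j * f x j)" using layer_mult[OF L] x by blast
  then have "f (x * x) = f x" using x by (simp add: d_def fun_eq_iff)
  then have "x * x - x \<in> I" by (rule layer_diff_ker[OF L J xxJ x(1)])
  then have "(- y) * (x * x - x) \<in> I" using I unfolding is_ideal_def by blast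
  moreover have "(- y) * (x * x - x) = e - x"
  proof -
    have "(- y) * (x * x - x) = x * y - x * y * x" by (simp add: algebra_simps)
    then show ?thesis unfolding e_def using y by simp
  qed
  ultimately have exI': "e - x \<in> I" by simp
  then have exJ: "e - x \<in> J" using I(2) by (rule subsetD[rotated])
  have add: "\<forall>x\<in>J. \<forall>y\<in>J. f (x + y) = (\<lambda>i. f x i + f y i)"
    and ker: "\<forall>x\<in>J. f x = (\<lambda>i. 0) \<longleftrightarrow> x \<in> I"
    using layer_add[OF L] layer_ker[OF L] by blast+
  have "f (x + (e - x)) = (\<lambda>j. f x j + f (e - x) j)"
    using add x exJ by blast
  moreover have "f (e - x) = (\<lambda>j. 0)" using ker exI' exJ by blast
  ultimately have "f e = f x" by simp
  then have "f e = d" using x(2) by simp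
  then show ?thesis using ee eJ unfolding d_def by (intro exI[of _ e]) simp
qed

lemma layer_span:
  assumes L: "layer_iso scale I J \<Lambda> f" and J: "is_ideal J"
    and e: "\<And>i. i \<in> \<Lambda> \<Longrightarrow> e i \<in> J \<and> f (e i) = (\<lambda>j. if j = i then 1 else 0)"
  shows "J \<subseteq> span (e ` \<Lambda> \<union> I)"
proof
  fix x assume x: "x \<in> J"
  define h where "h = f x"
  define T where "T = {i. h i \<noteq> 0}"
  have T: "finite T" "T \<subseteq> \<Lambda>" using layer_supp[OF L x] unfolding h_def T_def by auto
  have main: "(\<Sum>i\<in>T'. scale (h i) (e i)) \<in> J \<and>
      f (\<Sum>i\<in>T'. scale (h i) (e i)) = (\<lambda>j. \<Sum>i\<in>T'. h i * (if j = i then 1 else 0))"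
    if "finite T'" "T' \<subseteq> \<Lambda>" for T'
    using that
  proof (induction T' rule: finite_induct)
    case empty
    have "0 \<in> J" using J by (simp add: is_ideal_def)
    then show ?case using layer_zero[OF L] by simp
  next
    case (insert i T')
    let ?s = "\<Sum>i\<in>T'. scale (h i) (e i)"
    have ei: "e i \<in> J" "f (e i) = (\<lambda>j. if j = i then 1 else 0)" using e insert by auto
    have si: "scale (h i) (e i) \<in> J" using ideal_scale[OF J ei(1)] .
    have sJ: "?s \<in> J" using insert by auto
    have "f (scale (h i) (e i) + ?s) = (\<lambda>j. f (scale (h i) (e i)) j + f ?s j)"
      using layer_add[OF L] si sJ by blast
    moreover have "f (scale (h i) (e i)) = (\<lambda>j. h i * f (e i) j)"
      using layer_scale[OF L] ei by blast
    ultimately have fs: "f (scale (h i) (e i) + ?s) =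
        (\<lambda>j. h i * (if j = i then 1 else 0) + (\<Sum>i\<in>T'. h i * (if j = i then 1 else 0)))"
      using insert.IH insert.prems ei(2) by simp
    have mem: "scale (h i) (e i) + ?s \<in> J" using J si sJ unfolding is_ideal_def by blast
    have eq1: "(\<Sum>i\<in>insert i T'. scale (h i) (e i)) = scale (h i) (e i) + ?s"
      using insert.hyps by (rule sum.insert)
    have eq2: "\<And>j. (\<Sum>i\<in>insert i T'. h i * (if j = i then 1 else 0)) =
        h i * (if j = i then 1 else 0) + (\<Sum>i\<in>T'. h i * (if j = i then 1 else 0))"
      using insert.hyps by (rule sum.insert)
    show ?case unfolding eq1 eq2 using fs mem by blast
  qed
  define z where "z = (\<Sum>i\<in>T. scale (h i) (e i))"
  have zJ: "z \<in> J" and fz: "f z = (\<lambda>j. \<Sum>i\<in>T. h i * (if j = i then 1 else 0))"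
    using main[OF T] unfolding z_def by auto
  have "f z = h"
  proof
    fix j
    have "(\<Sum>i\<in>T. h i * (if j = i then 1 else 0)) = (\<Sum>i\<in>T. if i = j then h i else 0)"
      by (rule sum.cong) auto
    also have "\<dots> = (if j \<in> T then h j else 0)" using T(1) by (rule sum.delta)
    finally have "(\<Sum>i\<in>T. h i * (if j = i then 1 else 0)) = (if j \<in> T then h j else 0)" .
    then show "f z j = h j" using fz by (simp add: T_def)
  qed
  then have "x - z \<in> I" using layer_diff_ker[OF L J x zJ] h_def by simp
  then have xz: "x - z \<in> span (e ` \<Lambda> \<union> I)" by (simp add: span_base)
  have "z \<in> span (e ` \<Lambda> \<union> I)"
    unfolding z_def using T by (intro span_sum span_scale span_base) auto
  then have "z + (x - z) \<in> span (e ` \<Lambda> \<union> I)" using xz by (rule span_add)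
  then show "x \<in> span (e ` \<Lambda> \<union> I)" by simp
qed

end



theorem corollary7p4:
  fixes scale :: "'k::field \<Rightarrow> 'r::comm_ring_1 \<Rightarrow> 'r"
  assumes "in_class_RK scale"
    and "countable_type scale"
  shows "\<exists>B. conormed_basis scale B \<and> multiplicative_basis scale B"
proof -
  from assms(1) have alg: "is_K_algebra scale" and vnr: "von_neumann_regular TYPE('r)"
    and sa: "semiartinian TYPE('r)" by (auto simp: in_class_RK_def)
  have K: "kalg scale" using alg unfolding is_K_algebra_def kalg_def kalg_axioms_def by blast
  interpret kalg scale by (rule K)
  have vn: "\<And>x::'r. \<exists>y. x * y * x = x" using vnr by (simp add: von_neumann_regular_def)
  have U: "UNIV \<in> (socle_seq :: 'r set set)" using sa by (simp add: semiartinian_def)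
  from assms(2) have cs: "countable (socle_seq :: 'r set set)"
    and ex: "\<forall>I\<in>socle_seq. I \<noteq> UNIV \<longrightarrow> (\<exists>(\<Lambda>::'r set) f. \<Lambda> \<noteq> {} \<and> countable \<Lambda> \<and>
        layer_iso scale I (soc_succ I) \<Lambda> f)"
    by (auto simp: countable_type_def)
  have ch: "\<forall>I. \<exists>p::'r set \<times> ('r \<Rightarrow> 'r \<Rightarrow> 'k). I \<in> socle_seq \<and> I \<noteq> UNIV \<longrightarrow> countable (fst p) \<and>
      layer_iso scale I (soc_succ I) (fst p) (snd p)"
  proof
    fix I
    show "\<exists>p::'r set \<times> ('r \<Rightarrow> 'r \<Rightarrow> 'k). I \<in> socle_seq \<and> I \<noteq> UNIV \<longrightarrow> countable (fst p) \<and>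
      layer_iso scale I (soc_succ I) (fst p) (snd p)"
    proof (cases "I \<in> socle_seq \<and> I \<noteq> UNIV")
      case True
      then have "I \<in> socle_seq" "I \<noteq> UNIV" by auto
      have "\<exists>(\<Lambda>::'r set) f. \<Lambda> \<noteq> {} \<and> countable \<Lambda> \<and> layer_iso scale I (soc_succ I) \<Lambda> f"
        using bspec[OF ex \<open>I \<in> socle_seq\<close>] \<open>I \<noteq> UNIV\<close> by (rule mp)
      then obtain \<Lambda> :: "'r set" and f where "countable \<Lambda>" "layer_iso scale I (soc_succ I) \<Lambda> f"
        by auto
      then show ?thesis by (intro exI[of _ "(\<Lambda>, f)"]) simp
    next
      case False then show ?thesis by blast
    qed
  qed
  from choice[OF ch] obtain P :: "'r set \<Rightarrow> 'r set \<times> ('r \<Rightarrow> 'r \<Rightarrow> 'k)" where P0: "\<forall>I. I \<in> socle_seq \<and> I \<noteq> UNIV \<longrightarrow> countable (fst (P I)) \<and>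
      layer_iso scale I (soc_succ I) (fst (P I)) (snd (P I))" ..
  have P: "countable (fst (P I)) \<and> layer_iso scale I (soc_succ I) (fst (P I)) (snd (P I))"
    if "I \<in> socle_seq" "I \<noteq> UNIV" for I
    using P0[rule_format, OF conjI[OF that]] .
  define L where "L I = fst (P I)" for I
  define F where "F I = snd (P I)" for I
  have LF: "countable (L I)" "layer_iso scale I (soc_succ I) (L I) (F I)"
    if "I \<in> socle_seq" "I \<noteq> UNIV" for I
    using P[OF that] unfolding L_def F_def by auto
  define E where "E I i = (SOME e. e * e = e \<and> e \<in> soc_succ I \<and> F I e = (\<lambda>j. if j = i then 1 else 0))"
    for I i
  have E: "E I i * E I i = E I i \<and> E I i \<in> soc_succ I \<and> F I (E I i) = (\<lambda>j. if j = i then 1 else 0)"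
    if "I \<in> socle_seq" "I \<noteq> UNIV" "i \<in> L I" for I i
    unfolding E_def
    by (rule someI_ex, rule layer_lift[OF LF(2)[OF that(1,2)] soc_succ_ideal
          socle_seq_ideal[OF that(1)] soc_succ_ge vn that(3)])
  define G where "G = (\<Union>I\<in>socle_seq - {UNIV}. E I ` L I)"
  have Gc: "countable G" unfolding G_def using cs LF(1)
    by (intro countable_UN countable_image) auto
  have Gi: "x * x = x" if "x \<in> G" for x
    using that E unfolding G_def by auto
  have sub: "S \<subseteq> span G" if "S \<in> socle_seq" for S
    using that
  proof (induction rule: socle_seq.induct)
    case zero then show ?case by (simp add: span_zero)
  next
    case (succ I)
    show ?case
    proof (cases "I = UNIV")
      case True then show ?thesis using succ.IH by auto
    next
      case False
      have "soc_succ I \<subseteq> span (E I ` L I \<union> I)"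
        using E[OF succ.hyps False] by (intro layer_span[OF LF(2)[OF succ.hyps False] soc_succ_ideal]) auto
      moreover have "E I ` L I \<union> I \<subseteq> span G"
        using succ.IH succ.hyps False unfolding G_def by (auto intro: span_base)
      then have "span (E I ` L I \<union> I) \<subseteq> span G" by (rule span_minimal) (rule subspace_span)
      ultimately show ?thesis by blast
    qed
  next
    case (lim C)
    then show ?case by blast
  qed
  have spG: "span G = UNIV" using sub[OF U] by auto
  have "G \<noteq> {}"
  proof
    assume "G = {}"
    then have "(1::'r) \<in> span {}" using spG by simp
    then show False by simp
  qed
  define g where "g = from_nat_into G"
  have rg: "range g = G" unfolding g_def by (rule range_from_nat_into[OF \<open>G \<noteq> {}\<close> Gc])
  have T: "tree_setup scale g socle_seq"
    unfolding tree_setup_def tree_setup_axioms_def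
  proof (intro conjI allI impI K)
    show "\<And>n. g n * g n = g n" using Gi rg by auto
    show "span (range g) = UNIV" using rg spG by simp
    show "\<And>S. S \<in> socle_seq \<Longrightarrow> is_ideal S" by (rule socle_seq_ideal)
    show "\<And>S T. S \<in> socle_seq \<Longrightarrow> T \<in> socle_seq \<Longrightarrow> S \<subseteq> T \<or> T \<subseteq> S"
      by (rule socle_seq_chain)
  qed
  obtain B where B: "is_K_basis scale B UNIV" "\<forall>b\<in>B. \<forall>b'\<in>B. b * b' = 0 \<or> b * b' \<in> B"
    "\<forall>S\<in>socle_seq. \<exists>C\<subseteq>B. is_K_basis scale C S"
    using tree_setup.tree_result[OF T U] by blast
  show ?thesis using B unfolding conormed_basis_def multiplicative_basis_def by blast
qed

end
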